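(* Let $\mathbb G=V_1\times V_2$ be a step-two Carnot group that has $\mathbb F_3$ as one of its quotients, i.e. there is a surjective Carnot morphism $\mathbb G\to\mathbb F_3$. Then $\mathcal A(V_1\times V_2)\subsetneq\mathcal A_h(\mathbb G)$.
   Context: A step-two Carnot group is $\mathbb G=V_1\times V_2$ ($V_1,V_2$ finite-dimensional real vector spaces, $V_2\ne\{0\}$) with a bilinear skew-symmetric $[\cdot,\cdot]:V_1\times V_1\to V_2$ whose image spans $V_2$, and group law $(x,z)\cdot(x',z')=(x+x',z+z'+[x,x'])$. $\mathbb F_3=\Lambda^1(\mathbb R^3)\times\Lambda^2(\mathbb R^3)$ with bracket $[\theta,\theta']=\theta\wedge\theta'$. A Carnot morphism $\pi:\mathbb G\to\mathbb G'$ is $\pi(x,z)=(\pi_1(x),\pi_2(z))$ with $\pi_1,\pi_2$ linear and $\pi_2([x,y])=[\pi_1(x),\pi_1(y)]'$. $\mathcal A_h(\mathbb G)$ is the space of maps $f:\mathbb G\to\mathbb R$ such that for all $(x,z)\in\mathbb G$, $y\in V_1$, $t\mapsto f((x,z)\cdot(ty,0))$ is affine; $\mathcal A(V_1\times V_2)$ is the space of maps affine in the usual sense on $V_1\times V_2$ (always a subspace of $\mathcal A_h(\mathbb G)$). *)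

theory Defs
  imports "HOL-Analysis.Analysis"
begin

text \<open>A step-two Carnot group G = V1 x V2 is encoded by its bracket
  br :: V1 => V1 => V2, with V1, V2 finite-dimensional real vector spaces
  (Euclidean-space types).\<close>

definition step2_carnot :: "('a::euclidean_space \<Rightarrow> 'a \<Rightarrow> 'b::euclidean_space) \<Rightarrow> bool" where
  "step2_carnot br \<longleftrightarrow>
     bilinear br \<and> (\<forall>x y. br x y = - br y x) \<and>
     span (range (\<lambda>(x, y). br x y)) = UNIV \<and> (UNIV :: 'b set) \<noteq> {0}"

definition cmult :: "('a::real_vector \<Rightarrow> 'a \<Rightarrow> 'b::real_vector) \<Rightarrow> 'a \<times> 'b \<Rightarrow> 'a \<times> 'b \<Rightarrow> 'a \<times> 'b" where
  "cmult br p q = (fst p + fst q, snd p + snd q + br (fst p) (fst q))"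

text \<open>Lambda^1(R^3) is real^3 (coordinates w.r.t. e1,e2,e3); Lambda^2(R^3) is
  real^3 with coordinates w.r.t. the basis e1/\e2, e1/\e3, e2/\e3 (in this order).\<close>
definition f3_wedge :: "real^3 \<Rightarrow> real^3 \<Rightarrow> real^3" where
  "f3_wedge u v = vector [u$1 * v$2 - u$2 * v$1,
                          u$1 * v$3 - u$3 * v$1,
                          u$2 * v$3 - u$3 * v$2]"

definition surj_carnot_morphism_F3 ::
  "('a::euclidean_space \<Rightarrow> 'a \<Rightarrow> 'b::euclidean_space) \<Rightarrow> ('a \<Rightarrow> real^3) \<Rightarrow> ('b \<Rightarrow> real^3) \<Rightarrow> bool" where
  "surj_carnot_morphism_F3 br p1 p2 \<longleftrightarrow>
     linear p1 \<and> linear p2 \<and> (\<forall>x y. p2 (br x y) = f3_wedge (p1 x) (p1 y)) \<and>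
     surj (\<lambda>(x, z). (p1 x, p2 z))"

definition affine_fun_real :: "(real \<Rightarrow> real) \<Rightarrow> bool" where
  "affine_fun_real g \<longleftrightarrow> (\<exists>a b. \<forall>t. g t = a + b * t)"

definition horiz_affine :: "('a::real_vector \<Rightarrow> 'a \<Rightarrow> 'b::real_vector) \<Rightarrow> ('a \<times> 'b \<Rightarrow> real) \<Rightarrow> bool" where
  "horiz_affine br f \<longleftrightarrow>
     (\<forall>p y. affine_fun_real (\<lambda>t. f (cmult br p (t *\<^sub>R y, 0))))"

definition affine_map_on :: "('v::real_vector \<Rightarrow> real) \<Rightarrow> bool" where
  "affine_map_on f \<longleftrightarrow> (\<exists>l c. linear l \<and> (\<forall>p. f p = l p + c))"

end

theory Submission
  imports Defs
begin

definition ff :: "real^3 \<Rightarrow> real^3 \<Rightarrow> real" where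
  "ff x z = x$1 * z$3 - x$2 * z$2 + x$3 * z$1"

lemma ff_line:
  "ff (X + t *\<^sub>R Y) (Z + t *\<^sub>R f3_wedge X Y) = ff X Z + t * ff Y Z"
  unfolding ff_def f3_wedge_def by (simp add: algebra_simps)

lemma affine_horiz:
  assumes "step2_carnot br" and "affine_map_on f"
  shows "horiz_affine br f"
proof -
  from assms(2) obtain l c where l: "linear l" and f: "\<And>p. f p = l p + c"
    unfolding affine_map_on_def by blast
  have bl: "bilinear br" using assms(1) unfolding step2_carnot_def by blast
  show ?thesis unfolding horiz_affine_def affine_fun_real_def
  proof (intro allI)
    fix p :: "'a \<times> 'b" and y
    show "\<exists>a b. \<forall>t. f (cmult br p (t *\<^sub>R y, 0)) = a + b * t"
    proof (intro exI allI)
      fix t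
      have "cmult br p (t *\<^sub>R y, 0) = p + t *\<^sub>R (y, br (fst p) y)"
        using bilinear_rmul[OF bl] by (cases p) (simp add: cmult_def)
      moreover have "l (t *\<^sub>R (y, br (fst p) y)) = t * l (y, br (fst p) y)"
        by (rule linear_scale[OF l, simplified])
      ultimately show "f (cmult br p (t *\<^sub>R y, 0)) = (l p + c) + l (y, br (fst p) y) * t"
        by (simp only: f linear_add[OF l]) (simp add: algebra_simps)
    qed
  qed
qed

theorem corollary6p6:
  fixes br :: "'a::euclidean_space \<Rightarrow> 'a \<Rightarrow> 'b::euclidean_space"
  assumes "step2_carnot br"
    and "\<exists>p1 p2. surj_carnot_morphism_F3 br p1 p2"
  shows "{f :: 'a \<times> 'b \<Rightarrow> real. affine_map_on f} \<subset> {f. horiz_affine br f}"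
proof -
  obtain p1 p2 where m: "surj_carnot_morphism_F3 br p1 p2" using assms(2) by blast
  have l1: "linear p1" and l2: "linear p2" and w: "\<And>x y. p2 (br x y) = f3_wedge (p1 x) (p1 y)"
    and s: "surj (\<lambda>(x, z). (p1 x, p2 z))"
    using m unfolding surj_carnot_morphism_F3_def by auto
  have bl: "bilinear br" using assms(1) unfolding step2_carnot_def by blast
  define F where "F = (\<lambda>q::'a\<times>'b. ff (p1 (fst q)) (p2 (snd q)))"
  have hF: "horiz_affine br F" unfolding horiz_affine_def affine_fun_real_def
  proof (intro allI)
    fix p :: "'a \<times> 'b" and y
    show "\<exists>a b. \<forall>t. F (cmult br p (t *\<^sub>R y, 0)) = a + b * t"
    proof (intro exI allI)
      fix t
      have "F (cmult br p (t *\<^sub>R y, 0)) =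
        ff (p1 (fst p) + t *\<^sub>R p1 y) (p2 (snd p) + t *\<^sub>R f3_wedge (p1 (fst p)) (p1 y))"
        using bilinear_rmul[OF bl]
        by (simp add: F_def cmult_def linear_add[OF l1] linear_add[OF l2]
            linear_scale[OF l1] linear_scale[OF l2] w[symmetric])
      also have "\<dots> = F p + ff (p1 y) (p2 (snd p)) * t"
        by (simp add: ff_line F_def)
      finally show "F (cmult br p (t *\<^sub>R y, 0)) = F p + ff (p1 y) (p2 (snd p)) * t" .
    qed
  qed
  have nF: "\<not> affine_map_on F"
  proof
    assume "affine_map_on F"
    then obtain l c where l: "linear l" and f: "\<And>p. F p = l p + c"
      unfolding affine_map_on_def by blast
    obtain u where u: "(p1 (fst u), p2 (snd u)) = (vector [1,0,0], 0)"
      using s by (metis (no_types, lifting) case_prod_beta surj_def)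
    obtain v where v: "(p1 (fst v), p2 (snd v)) = (0, vector [0,0,1])"
      using s by (metis (no_types, lifting) case_prod_beta surj_def)
    have "F (u + v) - F u - F v + F 0 = 0"
      by (simp add: f linear_add[OF l] linear_0[OF l])
    moreover have "F (u + v) = 1" using u v
      by (simp add: F_def linear_add[OF l1] linear_add[OF l2] ff_def)
    moreover have "F u = 0" using u by (simp add: F_def ff_def)
    moreover have "F v = 0" using v by (simp add: F_def ff_def)
    moreover have "F 0 = 0" by (simp add: F_def ff_def linear_0[OF l1] linear_0[OF l2])
    ultimately show False by simp
  qed
  show ?thesis using affine_horiz[OF assms(1)] hF nF by blast
qed

end
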